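(* Every componentwise polymatroidal monomial ideal $I\subset K[x_1,\ldots,x_n]$ satisfies the non-pure dual exchange property.
   Context: For a monomial $u$, $\deg_{x_i}(u)$ is the exponent of $x_i$ in $u$; $G(I)$ is the minimal monomial generating set. A monomial ideal generated in a single degree is polymatroidal if for all $u,v\in G(I)$ and all $i$ with $\deg_{x_i}(u)>\deg_{x_i}(v)$ there exists $j$ with $\deg_{x_j}(u)<\deg_{x_j}(v)$ and $x_j(u/x_i)\in I$. $I_{\langle j\rangle}$ denotes the ideal generated by all monomials of degree $j$ in $I$; $I$ is componentwise polymatroidal if every nonzero $I_{\langle j\rangle}$ is polymatroidal. A monomial ideal $I$ satisfies the non-pure dual exchange property if for all $u,v \in G(I)$ with $\deg(u) \leq \deg(v)$ and all $i$ with $\deg_{x_i}(v) < \deg_{x_i}(u)$, there exists $j$ with $\deg_{x_j}(v) > \deg_{x_j}(u)$ and $x_i(v/x_j) \in I$. *)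

theory Defs
  imports Main
begin

text \<open>Monomials in K[x_1,...,x_n] are represented by their exponent vectors
  u :: nat => nat, with u i = deg_{x_i}(u), supported on {1..n}.
  A monomial ideal I is represented by the set of monomials it contains
  (which is a K-basis of I); the coefficient field K plays no role.\<close>

definition monoms :: "nat \<Rightarrow> (nat \<Rightarrow> nat) set" where
  "monoms n = {u. \<forall>i. i \<notin> {1..n} \<longrightarrow> u i = 0}"

definition mdvd :: "(nat \<Rightarrow> nat) \<Rightarrow> (nat \<Rightarrow> nat) \<Rightarrow> bool" where
  "mdvd u v \<longleftrightarrow> (\<forall>i. u i \<le> v i)"

definition mdeg :: "nat \<Rightarrow> (nat \<Rightarrow> nat) \<Rightarrow> nat" where
  "mdeg n u = (\<Sum>i=1..n. u i)"

definition mono_ideal :: "nat \<Rightarrow> (nat \<Rightarrow> nat) set \<Rightarrow> bool" where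
  "mono_ideal n I \<longleftrightarrow> I \<subseteq> monoms n \<and>
     (\<forall>u\<in>I. \<forall>v\<in>monoms n. mdvd u v \<longrightarrow> v \<in> I)"

definition gens :: "(nat \<Rightarrow> nat) set \<Rightarrow> (nat \<Rightarrow> nat) set" where
  "gens I = {u \<in> I. \<forall>v\<in>I. mdvd v u \<longrightarrow> v = u}"

definition mshift :: "(nat \<Rightarrow> nat) \<Rightarrow> nat \<Rightarrow> nat \<Rightarrow> (nat \<Rightarrow> nat)" where
  "mshift u i j = (\<lambda>k. u k - (if k = i then 1 else 0) + (if k = j then 1 else 0))"

definition comp :: "nat \<Rightarrow> (nat \<Rightarrow> nat) set \<Rightarrow> nat \<Rightarrow> (nat \<Rightarrow> nat) set" where
  "comp n I d = {v \<in> monoms n. \<exists>u\<in>I. mdeg n u = d \<and> mdvd u v}"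

definition polymatroidal :: "nat \<Rightarrow> (nat \<Rightarrow> nat) set \<Rightarrow> bool" where
  "polymatroidal n I \<longleftrightarrow>
     (\<exists>d. \<forall>u\<in>gens I. mdeg n u = d) \<and>
     (\<forall>u\<in>gens I. \<forall>v\<in>gens I. \<forall>i\<in>{1..n}. u i > v i \<longrightarrow>
        (\<exists>j\<in>{1..n}. u j < v j \<and> mshift u i j \<in> I))"

definition componentwise_polymatroidal :: "nat \<Rightarrow> (nat \<Rightarrow> nat) set \<Rightarrow> bool" where
  "componentwise_polymatroidal n I \<longleftrightarrow>
     (\<forall>d. comp n I d \<noteq> {} \<longrightarrow> polymatroidal n (comp n I d))"

definition nonpure_dual_exchange :: "nat \<Rightarrow> (nat \<Rightarrow> nat) set \<Rightarrow> bool" where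
  "nonpure_dual_exchange n I \<longleftrightarrow>
     (\<forall>u\<in>gens I. \<forall>v\<in>gens I. mdeg n u \<le> mdeg n v \<longrightarrow>
       (\<forall>i\<in>{1..n}. v i < u i \<longrightarrow>
          (\<exists>j\<in>{1..n}. v j > u j \<and> mshift v j i \<in> I)))"

end

theory Submission
  imports Defs
begin

lemma mdvd_eq:
  assumes "y \<in> monoms n" "w \<in> monoms n" "mdvd y w" "mdeg n y = mdeg n w"
  shows "y = w"
proof (rule ccontr)
  assume "y \<noteq> w"
  then obtain k where k: "y k \<noteq> w k" by auto
  have le: "\<And>k. y k \<le> w k" using assms(3) by (simp add: mdvd_def)
  have "k \<in> {1..n}"
  proof (rule ccontr)
    assume "k \<notin> {1..n}"
    have "\<forall>i. i \<notin> {1..n} \<longrightarrow> y i = 0" using assms(1) unfolding monoms_def mem_Collect_eq .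
    moreover have "\<forall>i. i \<notin> {1..n} \<longrightarrow> w i = 0" using assms(2) unfolding monoms_def mem_Collect_eq .
    ultimately
    have "y k = 0" "w k = 0" using \<open>k \<notin> {1..n}\<close> by blast+
    thus False using k by simp
  qed
  moreover have "y k < w k" using k le[of k] by simp
  ultimately have "(\<Sum>i=1..n. y i) < (\<Sum>i=1..n. w i)"
    by (intro sum_strict_mono_ex1) (auto simp: le)
  then show False using assms(4) by (simp add: mdeg_def)
qed

lemma mshift_monoms:
  assumes "b \<in> monoms n" "w \<in> {1..n}"
  shows "mshift b z w \<in> monoms n"
  using assms unfolding monoms_def mshift_def by auto

lemma mshift_deg:
  assumes "b z \<ge> 1" "z \<in> {1..n}" "w \<in> {1..n}"
  shows "mdeg n (mshift b z w) = mdeg n b"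
proof -
  have s1: "mdeg n (mshift b z w) = (\<Sum>k=1..n. b k - (if k = z then 1 else 0)) + (\<Sum>k=1..n. (if k = w then 1 else 0))"
    unfolding mdeg_def mshift_def by (rule sum.distrib)
  have s2: "(\<Sum>k=1..n. b k - (if k = z then 1 else 0)) = (\<Sum>k=1..n. b k) - (\<Sum>k=1..n. (if k = z then 1 else 0))"
    using assms(1) by (intro sum_subtractf_nat) auto
  have s3: "(\<Sum>k=1..n. (if k = z then 1 else 0)::nat) = 1" using assms(2) by simp
  have s4: "(\<Sum>k=1..n. (if k = w then 1 else 0)::nat) = 1" using assms(3) by simp
  have s5: "(\<Sum>k=1..n. b k) \<ge> b z" using assms(2) by (intro member_le_sum) auto
  show ?thesis using s1 s2 s3 s4 s5 assms(1) unfolding mdeg_def by linarith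
qed

lemma dual_exch:
  assumes exch: "\<forall>u\<in>B. \<forall>v\<in>B. \<forall>i\<in>{1..n}. u i > v i \<longrightarrow> (\<exists>j\<in>{1..n}. u j < v j \<and> mshift u i j \<in> B)"
    and Bm: "B \<subseteq> monoms n" and Bd: "\<forall>w\<in>B. mdeg n w = d"
  shows "E = (\<Sum>k=1..n. b k - a k) \<Longrightarrow> a\<in>B \<Longrightarrow> b\<in>B \<Longrightarrow> i\<in>{1..n} \<Longrightarrow> a i < b i
     \<Longrightarrow> \<exists>j\<in>{1..n}. a j > b j \<and> mshift a j i \<in> B"
proof (induction E arbitrary: b rule: less_induct)
  case (less E b)
  show ?case
  proof (cases "\<exists>z\<in>{1..n}. a z < b z \<and> (z \<noteq> i \<or> a i + 1 < b i)")
    case True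
    then obtain z where z: "z \<in> {1..n}" "a z < b z" "z \<noteq> i \<or> a i + 1 < b i" by blast
    from exch less.prems z obtain w where w: "w \<in> {1..n}" "b w < a w" "mshift b z w \<in> B"
      by blast
    define b' where "b' = mshift b z w"
    have zw: "z \<noteq> w" using z w by auto
    have b'v: "\<And>k. b' k = b k - (if k = z then 1 else 0) + (if k = w then 1 else 0)"
      unfolding b'_def mshift_def by simp
    have lt: "(\<Sum>k=1..n. b' k - a k) < (\<Sum>k=1..n. b k - a k)"
    proof (rule sum_strict_mono_ex1)
      show "finite {1..n}" by simp
      show "\<forall>k\<in>{1..n}. b' k - a k \<le> b k - a k"
        using zw w(2) by (auto simp: b'v)
      show "\<exists>k\<in>{1..n}. b' k - a k < b k - a k"
        using z zw by (intro bexI[of _ z]) (auto simp: b'v)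
    qed
    have b'i: "a i < b' i"
    proof (cases "i = z")
      case True thus ?thesis using z zw by (auto simp: b'v)
    next
      case False
      have "i \<noteq> w" using w(2) less.prems(5) by auto
      thus ?thesis using False less.prems(5) by (simp add: b'v)
    qed
    have "b' \<in> B" using w(3) unfolding b'_def .
    from less.IH[of "\<Sum>k=1..n. b' k - a k" b', OF _ refl less.prems(2) this less.prems(4) b'i] lt less.prems(1)
    obtain j where j: "j \<in> {1..n}" "a j > b' j" "mshift a j i \<in> B"
      by blast
    have "a j > b j"
    proof (cases "j = z")
      case True thus ?thesis using j z zw by (auto simp: b'v)
    next
      case False thus ?thesis using j by (auto simp: b'v split: if_splits)
    qed
    thus ?thesis using j by blast
  next
    case False
    hence F: "\<And>z. z \<in> {1..n} \<Longrightarrow> a z < b z \<Longrightarrow> z = i \<and> b i = a i + 1" by auto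
    have bi: "b i = a i + 1" using F[OF less.prems(4,5)] by simp
    have "\<exists>j\<in>{1..n}. a j > b j"
    proof (rule ccontr)
      assume "\<not> ?thesis"
      hence "\<forall>k\<in>{1..n}. a k \<le> b k" by auto
      hence "(\<Sum>k=1..n. a k) < (\<Sum>k=1..n. b k)"
        using less.prems(4,5) by (intro sum_strict_mono_ex1) auto
      thus False using Bd less.prems(2,3) by (auto simp: mdeg_def)
    qed
    then obtain j where j: "j \<in> {1..n}" "a j > b j" by blast
    have ji: "j \<noteq> i" using j less.prems(5) by auto
    have am: "a \<in> monoms n" "b \<in> monoms n" using Bm less.prems(2,3) by auto
    have ms: "mshift a j i \<in> monoms n" using mshift_monoms[OF am(1) less.prems(4)] .
    have md: "mdeg n (mshift a j i) = mdeg n a"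
      using mshift_deg[of a j n i] j less.prems(4) by simp
    have dv: "mdvd b (mshift a j i)"
      unfolding mdvd_def
    proof
      fix k
      show "b k \<le> mshift a j i k"
      proof (cases "k \<in> {1..n}")
        case False thus ?thesis using am(2) by (simp add: monoms_def)
      next
        case True
        show ?thesis
        proof (cases "k = i")
          case True thus ?thesis using bi ji by (simp add: mshift_def)
        next
          case False
          hence "\<not> a k < b k" using F[OF \<open>k \<in> {1..n}\<close>] by auto
          thus ?thesis using False j by (auto simp: mshift_def)
        qed
      qed
    qed
    have "b = mshift a j i"
      using mdvd_eq[OF am(2) ms dv] md Bd less.prems(2,3) by simp
    thus ?thesis using j less.prems(3) by auto
  qed
qed

theorem proposition1p5:
  fixes n :: nat and I :: "(nat \<Rightarrow> nat) set"
  assumes "mono_ideal n I"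
    and "componentwise_polymatroidal n I"
  shows "nonpure_dual_exchange n I"
  unfolding nonpure_dual_exchange_def
proof (intro ballI impI)
  fix u v i
  assume u: "u \<in> gens I" and v: "v \<in> gens I" and deg: "mdeg n u \<le> mdeg n v"
    and i: "i \<in> {1..n}" and vi: "v i < u i"
  have IM: "I \<subseteq> monoms n" and up: "\<And>x y. x \<in> I \<Longrightarrow> y \<in> monoms n \<Longrightarrow> mdvd x y \<Longrightarrow> y \<in> I"
    using assms(1) unfolding mono_ideal_def by auto
  define d where "d = mdeg n v"
  define B where "B = {w \<in> I. mdeg n w = d}"
  have inI: "\<And>x. x \<in> comp n I d \<Longrightarrow> mdeg n x = d \<Longrightarrow> x \<in> I"
  proof -
    fix x assume x: "x \<in> comp n I d" "mdeg n x = d"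
    then obtain y where y: "y \<in> I" "mdeg n y = d" "mdvd y x" "x \<in> monoms n"
      unfolding comp_def by auto
    have "y = x" using mdvd_eq[of y n x] y x IM by auto
    thus "x \<in> I" using y by simp
  qed
  have Bg: "B \<subseteq> gens (comp n I d)"
  proof
    fix w assume w: "w \<in> B"
    have wc: "w \<in> comp n I d" using w IM unfolding B_def comp_def by (auto simp: mdvd_def)
    show "w \<in> gens (comp n I d)"
      unfolding gens_def
    proof (intro CollectI conjI ballI impI wc)
      fix x assume x: "x \<in> comp n I d" "mdvd x w"
      then obtain y where y: "y \<in> I" "mdeg n y = d" "mdvd y x" "x \<in> monoms n"
        unfolding comp_def by auto
      have yw: "mdvd y w" using x(2) y(3) unfolding mdvd_def by (meson le_trans)
      have "y = w" using mdvd_eq[of y n w] y w IM yw unfolding B_def by auto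
      thus "x = w" using x(2) y(3) unfolding mdvd_def by (auto intro: antisym)
    qed
  qed
  have vI: "v \<in> I" using v unfolding gens_def by auto
  have vB: "v \<in> B" using vI unfolding B_def d_def by simp
  have ne: "comp n I d \<noteq> {}" using Bg vB unfolding gens_def by auto
  have pm: "polymatroidal n (comp n I d)" using assms(2) ne
    unfolding componentwise_polymatroidal_def by auto
  have exch: "\<forall>a\<in>B. \<forall>b\<in>B. \<forall>k\<in>{1..n}. a k > b k \<longrightarrow> (\<exists>j\<in>{1..n}. a j < b j \<and> mshift a k j \<in> B)"
  proof (intro ballI impI)
    fix a b k assume a: "a \<in> B" and b: "b \<in> B" and k: "k \<in> {1..n}" and lt: "a k > b k"
    have pex: "\<forall>u\<in>gens (comp n I d). \<forall>v\<in>gens (comp n I d). \<forall>i\<in>{1..n}. u i > v i \<longrightarrow>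
        (\<exists>j\<in>{1..n}. u j < v j \<and> mshift u i j \<in> comp n I d)"
      using pm unfolding polymatroidal_def by (elim conjE)
    have "a \<in> gens (comp n I d)" "b \<in> gens (comp n I d)" using a b Bg by auto
    then obtain j where j: "j \<in> {1..n}" "a j < b j" "mshift a k j \<in> comp n I d"
      using pex k lt by blast
    have "mdeg n (mshift a k j) = d" using mshift_deg[of a k n j] lt k j a unfolding B_def by simp
    hence "mshift a k j \<in> B" using inI j(3) unfolding B_def by auto
    thus "\<exists>j\<in>{1..n}. a j < b j \<and> mshift a k j \<in> B" using j by blast
  qed
  have uI: "u \<in> I" using u unfolding gens_def by auto
  define u' where "u' = (\<lambda>k. u k + (if k = i then d - mdeg n u else 0))"
  have u'm: "u' \<in> monoms n" using uI IM i unfolding u'_def monoms_def by auto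
  have "u' \<in> I" using up[OF uI u'm] unfolding u'_def mdvd_def by simp
  moreover have "mdeg n u' = d"
  proof -
    have "mdeg n u' = mdeg n u + (\<Sum>k=1..n. (if k = i then d - mdeg n u else 0))"
      unfolding u'_def mdeg_def by (simp add: sum.distrib)
    also have "\<dots> = mdeg n u + (d - mdeg n u)" using i by simp
    finally show ?thesis using deg d_def by simp
  qed
  ultimately have u'B: "u' \<in> B" unfolding B_def by simp
  have "v i < u' i" using vi unfolding u'_def by simp
  have BM: "B \<subseteq> monoms n" using IM unfolding B_def by blast
  have BD: "\<forall>w\<in>B. mdeg n w = d" unfolding B_def by blast
  from dual_exch[OF exch BM BD refl vB u'B i \<open>v i < u' i\<close>]
  obtain j where j: "j \<in> {1..n}" "v j > u' j" "mshift v j i \<in> B"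
    by blast
  have "v j > u j" using j(2) unfolding u'_def by simp
  thus "\<exists>j\<in>{1..n}. u j < v j \<and> mshift v j i \<in> I" using j unfolding B_def by auto
qed

end
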